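(* Let $D$ and $V$ be one-dimensional Noetherian local integral domains with common quotient field $L$, and set $R=D\cap V$. Suppose: (a) $V$ is a discrete rank one valuation ring of $L$; (b) there is a prime element $\pi$ of $V$ that is also a prime element of $R$; (c) for every maximal ideal $N$ of the integral closure $\overline D$ of $D$, the valuation ring $\overline D_N$ is independent of $V$; (d) $D$ is not a unique factorization domain; (e) there are at least two non-associated irreducible elements of $D$ that are also irreducible in $R$. Then $R$ is a one-dimensional Noetherian integral domain (in particular atomic) with exactly two maximal ideals, $\pi$ is, up to associates in $R$, the unique prime element of $R$, $R$ has irreducible elements not associated to $\pi$, and none of these is absolutely irreducible.
   Context: Two valuation rings $V_1,V_2$ of a field $L$ are independent if the only valuation ring of $L$ containing both $V_1$ and $V_2$ is $L$ itself. Factorization notions for a domain refer to its monoid of non-zero elements. Two factorizations into irreducibles $a_1\cdots a_n=b_1\cdots b_m$ of the same element are essentially the same if $n=m$ and, after re-indexing, $a_j$ and $b_j$ are associated for all $j$. An irreducible $r$ is absolutely irreducible if for every $n\in\mathbb N$, every factorization of $r^n$ into irreducibles is essentially the same as $r^n=r\cdots r$. *)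

theory Defs
  imports "HOL-Computational_Algebra.Polynomial"
begin

text \<open>All rings considered are subrings of a fixed field, the type 'a (playing the role of L).
  Ring-theoretic notions are relativised to a subring S :: 'a set.\<close>

definition subring :: "'a::field set \<Rightarrow> bool" where
  "subring S \<longleftrightarrow> 0 \<in> S \<and> 1 \<in> S \<and> (\<forall>x\<in>S. \<forall>y\<in>S. x + y \<in> S \<and> x - y \<in> S \<and> x * y \<in> S)"

definition quotient_field_is_L :: "'a::field set \<Rightarrow> bool" where
  "quotient_field_is_L S \<longleftrightarrow> (\<forall>x. \<exists>a\<in>S. \<exists>b\<in>S. b \<noteq> 0 \<and> x = a / b)"

definition ideal_in :: "'a::field set \<Rightarrow> 'a set \<Rightarrow> bool" where
  "ideal_in S I \<longleftrightarrow> I \<subseteq> S \<and> 0 \<in> I \<and> (\<forall>x\<in>I. \<forall>y\<in>I. x + y \<in> I \<and> x - y \<in> I)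
     \<and> (\<forall>s\<in>S. \<forall>x\<in>I. s * x \<in> I)"

definition ideal_gen :: "'a::field set \<Rightarrow> 'a set \<Rightarrow> 'a set" where
  "ideal_gen S F = {sum (\<lambda>f. c f * f) F | c. \<forall>f\<in>F. c f \<in> S}"

definition noetherian :: "'a::field set \<Rightarrow> bool" where
  "noetherian S \<longleftrightarrow> (\<forall>I. ideal_in S I \<longrightarrow> (\<exists>F. finite F \<and> F \<subseteq> S \<and> I = ideal_gen S F))"

definition prime_ideal_in :: "'a::field set \<Rightarrow> 'a set \<Rightarrow> bool" where
  "prime_ideal_in S P \<longleftrightarrow> ideal_in S P \<and> P \<noteq> S \<and>
     (\<forall>a\<in>S. \<forall>b\<in>S. a * b \<in> P \<longrightarrow> a \<in> P \<or> b \<in> P)"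

definition maximal_ideal_in :: "'a::field set \<Rightarrow> 'a set \<Rightarrow> bool" where
  "maximal_ideal_in S M \<longleftrightarrow> ideal_in S M \<and> M \<noteq> S \<and>
     (\<forall>J. ideal_in S J \<and> M \<subseteq> J \<longrightarrow> J = M \<or> J = S)"

definition krull_dim_one :: "'a::field set \<Rightarrow> bool" where
  "krull_dim_one S \<longleftrightarrow>
     (\<exists>P Q. prime_ideal_in S P \<and> prime_ideal_in S Q \<and> P \<subset> Q) \<and>
     \<not> (\<exists>P Q T. prime_ideal_in S P \<and> prime_ideal_in S Q \<and> prime_ideal_in S T \<and> P \<subset> Q \<and> Q \<subset> T)"

definition local_ring :: "'a::field set \<Rightarrow> bool" where
  "local_ring S \<longleftrightarrow> (\<exists>!M. maximal_ideal_in S M)"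

definition unit_in :: "'a::field set \<Rightarrow> 'a \<Rightarrow> bool" where
  "unit_in S u \<longleftrightarrow> u \<in> S \<and> (\<exists>v\<in>S. u * v = 1)"

definition dvd_in :: "'a::field set \<Rightarrow> 'a \<Rightarrow> 'a \<Rightarrow> bool" where
  "dvd_in S a b \<longleftrightarrow> (\<exists>c\<in>S. b = a * c)"

definition assoc_in :: "'a::field set \<Rightarrow> 'a \<Rightarrow> 'a \<Rightarrow> bool" where
  "assoc_in S a b \<longleftrightarrow> (\<exists>u. unit_in S u \<and> a = u * b)"

definition irreducible_in :: "'a::field set \<Rightarrow> 'a \<Rightarrow> bool" where
  "irreducible_in S r \<longleftrightarrow> r \<in> S \<and> r \<noteq> 0 \<and> \<not> unit_in S r \<and>
     (\<forall>a\<in>S. \<forall>b\<in>S. r = a * b \<longrightarrow> unit_in S a \<or> unit_in S b)"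

definition prime_elem_in :: "'a::field set \<Rightarrow> 'a \<Rightarrow> bool" where
  "prime_elem_in S p \<longleftrightarrow> p \<in> S \<and> p \<noteq> 0 \<and> \<not> unit_in S p \<and>
     (\<forall>a\<in>S. \<forall>b\<in>S. dvd_in S p (a * b) \<longrightarrow> dvd_in S p a \<or> dvd_in S p b)"

definition factorization_in :: "'a::field set \<Rightarrow> 'a list \<Rightarrow> 'a \<Rightarrow> bool" where
  "factorization_in S xs x \<longleftrightarrow> (\<forall>a\<in>set xs. irreducible_in S a) \<and> prod_list xs = x"

definition essentially_same :: "'a::field set \<Rightarrow> 'a list \<Rightarrow> 'a list \<Rightarrow> bool" where
  "essentially_same S xs ys \<longleftrightarrow> length xs = length ys \<and>
     (\<exists>\<sigma>. bij_betw \<sigma> {..<length xs} {..<length xs} \<and>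
         (\<forall>j<length xs. assoc_in S (xs ! j) (ys ! \<sigma> j)))"

definition atomic :: "'a::field set \<Rightarrow> bool" where
  "atomic S \<longleftrightarrow> (\<forall>x\<in>S. x \<noteq> 0 \<and> \<not> unit_in S x \<longrightarrow> (\<exists>xs. factorization_in S xs x))"

definition UFD :: "'a::field set \<Rightarrow> bool" where
  "UFD S \<longleftrightarrow> atomic S \<and>
     (\<forall>x xs ys. factorization_in S xs x \<and> factorization_in S ys x \<longrightarrow> essentially_same S xs ys)"

definition abs_irreducible_in :: "'a::field set \<Rightarrow> 'a \<Rightarrow> bool" where
  "abs_irreducible_in S r \<longleftrightarrow> irreducible_in S r \<and>
     (\<forall>n::nat. \<forall>xs. factorization_in S xs (r ^ n) \<longrightarrow> essentially_same S xs (replicate n r))"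

definition valuation_ring :: "'a::field set \<Rightarrow> bool" where
  "valuation_ring W \<longleftrightarrow> subring W \<and> (\<forall>x. x \<noteq> 0 \<longrightarrow> x \<in> W \<or> inverse x \<in> W)"

definition discrete_rank_one_valuation_ring :: "'a::field set \<Rightarrow> bool" where
  "discrete_rank_one_valuation_ring V \<longleftrightarrow>
     (\<exists>v :: 'a \<Rightarrow> int.
        (\<forall>x y. x \<noteq> 0 \<and> y \<noteq> 0 \<longrightarrow> v (x * y) = v x + v y) \<and>
        (\<forall>x y. x \<noteq> 0 \<and> y \<noteq> 0 \<and> x + y \<noteq> 0 \<longrightarrow> v (x + y) \<ge> min (v x) (v y)) \<and>
        v ` (UNIV - {0}) = UNIV \<and>
        V = {x. x = 0 \<or> v x \<ge> 0})"

definition independent :: "'a::field set \<Rightarrow> 'a set \<Rightarrow> bool" where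
  "independent V1 V2 \<longleftrightarrow> (\<forall>W. valuation_ring W \<and> V1 \<subseteq> W \<and> V2 \<subseteq> W \<longrightarrow> W = UNIV)"

definition integral_closure :: "'a::field set \<Rightarrow> 'a set" where
  "integral_closure S = {x. \<exists>p::'a poly. lead_coeff p = 1 \<and> (\<forall>i. coeff p i \<in> S) \<and> poly p x = 0}"

definition localization :: "'a::field set \<Rightarrow> 'a set \<Rightarrow> 'a set" where
  "localization S N = {a / b | a b. a \<in> S \<and> b \<in> S \<and> b \<notin> N}"

end

theory Submission
  imports Defs
begin


lemma subringD:
  assumes "subring S"
  shows "0 \<in> S" "1 \<in> S" "x \<in> S \<Longrightarrow> y \<in> S \<Longrightarrow> x + y \<in> S"
    "x \<in> S \<Longrightarrow> y \<in> S \<Longrightarrow> x - y \<in> S" "x \<in> S \<Longrightarrow> y \<in> S \<Longrightarrow> x * y \<in> S"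
  using assms unfolding subring_def by auto

lemma subring_uminus: "subring S \<Longrightarrow> x \<in> S \<Longrightarrow> - x \<in> S"
  using subringD(4)[of S 0 x] subringD(1)[of S] by simp

lemma subring_power: "subring S \<Longrightarrow> x \<in> S \<Longrightarrow> x ^ n \<in> S"
  by (induction n) (auto intro: subringD)

lemma unit_in_iff: "unit_in S u \<longleftrightarrow> u \<in> S \<and> u \<noteq> 0 \<and> inverse u \<in> S"
proof
  assume "unit_in S u"
  then obtain w where "u \<in> S" "w \<in> S" "u * w = 1" unfolding unit_in_def by auto
  moreover then have "u \<noteq> 0" by auto
  moreover then have "w = inverse u" using \<open>u * w = 1\<close>
    by (metis inverse_unique)
  ultimately show "u \<in> S \<and> u \<noteq> 0 \<and> inverse u \<in> S" by auto
next
  assume "u \<in> S \<and> u \<noteq> 0 \<and> inverse u \<in> S"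
  then show "unit_in S u" unfolding unit_in_def by (metis right_inverse)
qed

lemma unit_mult: "subring S \<Longrightarrow> unit_in S a \<Longrightarrow> unit_in S b \<Longrightarrow> unit_in S (a * b)"
  by (auto simp: unit_in_iff subringD(5) inverse_mult_distrib)

lemma unit_inverse: "unit_in S a \<Longrightarrow> unit_in S (inverse a)"
  by (auto simp: unit_in_iff)

lemma unit_power: "subring S \<Longrightarrow> unit_in S a \<Longrightarrow> unit_in S (a ^ n)"
  by (auto simp: unit_in_iff subring_power power_inverse[symmetric])

lemma unit_one: "subring S \<Longrightarrow> unit_in S 1"
  by (auto simp: unit_in_iff subringD)

section \<open>Ideals\<close>

lemma idealD:
  assumes "ideal_in S I"
  shows "I \<subseteq> S" "0 \<in> I" "x \<in> I \<Longrightarrow> y \<in> I \<Longrightarrow> x + y \<in> I"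
    "x \<in> I \<Longrightarrow> y \<in> I \<Longrightarrow> x - y \<in> I" "s \<in> S \<Longrightarrow> x \<in> I \<Longrightarrow> s * x \<in> I"
  using assms unfolding ideal_in_def by auto

lemma ideal_mult_right: "ideal_in S I \<Longrightarrow> s \<in> S \<Longrightarrow> x \<in> I \<Longrightarrow> x * s \<in> I"
  using idealD(5) by (metis mult.commute)

lemma ideal_sum:
  assumes "ideal_in S I" "finite A" "\<forall>a\<in>A. g a \<in> I"
  shows "sum g A \<in> I"
  using assms(2,3) by (induction A rule: finite_induct) (auto intro: idealD[OF assms(1)])

lemma ideal_one: "ideal_in S I \<Longrightarrow> 1 \<in> I \<Longrightarrow> I = S"
  using idealD(1,5)[of S I] by (metis mult.right_neutral subset_antisym subsetI)

lemma ideal_unit: "ideal_in S I \<Longrightarrow> unit_in S u \<Longrightarrow> u \<in> I \<Longrightarrow> I = S"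
  by (metis ideal_one ideal_mult_right unit_in_def)

lemma ideal_power: "ideal_in S I \<Longrightarrow> subring S \<Longrightarrow> x \<in> I \<Longrightarrow> n \<ge> 1 \<Longrightarrow> x ^ n \<in> I"
proof -
  assume a: "ideal_in S I" "subring S" "x \<in> I" "n \<ge> 1"
  then have "x ^ n = x * x ^ (n - 1)" by (metis le_add_diff_inverse power_add power_one_right)
  moreover have "x ^ (n - 1) \<in> S" using a idealD(1) subring_power by blast
  ultimately show ?thesis using a ideal_mult_right by metis
qed

definition pid :: "'a::field set \<Rightarrow> 'a \<Rightarrow> 'a set" where
  "pid S x = {x * c | c. c \<in> S}"

lemma ideal_inI:
  assumes "I \<subseteq> S" "0 \<in> I" "\<And>x y. x \<in> I \<Longrightarrow> y \<in> I \<Longrightarrow> x + y \<in> I"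
    "\<And>x y. x \<in> I \<Longrightarrow> y \<in> I \<Longrightarrow> x - y \<in> I" "\<And>s x. s \<in> S \<Longrightarrow> x \<in> I \<Longrightarrow> s * x \<in> I"
  shows "ideal_in S I"
  using assms unfolding ideal_in_def by auto

lemma pid_ideal:
  assumes "subring S" "x \<in> S"
  shows "ideal_in S (pid S x)"
proof -
  note sr = subringD[OF assms(1)]
  show ?thesis
  proof (rule ideal_inI)
    show "pid S x \<subseteq> S" unfolding pid_def using sr assms(2) by auto
    show "0 \<in> pid S x" unfolding pid_def using sr by (auto intro!: exI[of _ 0])
  next
    fix a b assume "a \<in> pid S x" "b \<in> pid S x"
    then obtain c d where "a = x * c" "b = x * d" "c \<in> S" "d \<in> S" unfolding pid_def by auto
    moreover have "x * c + x * d = x * (c + d)" "x * c - x * d = x * (c - d)" by (simp_all add: algebra_simps)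
    ultimately show "a + b \<in> pid S x" "a - b \<in> pid S x" unfolding pid_def using sr by blast+
  next
    fix s a assume "s \<in> S" "a \<in> pid S x"
    then obtain c where "a = x * c" "c \<in> S" unfolding pid_def by auto
    moreover have "s * (x * c) = x * (s * c)" by (simp add: algebra_simps)
    ultimately show "s * a \<in> pid S x" unfolding pid_def using sr \<open>s \<in> S\<close> by blast
  qed
qed

lemma pid_mem: "subring S \<Longrightarrow> x \<in> pid S x"
  unfolding pid_def by (auto intro!: exI[of _ 1] subringD)

lemma prime_ideal_power:
  assumes "prime_ideal_in S P" "subring S" "a \<in> S" "a ^ n \<in> P"
  shows "a \<in> P"
  using assms(4)
proof (induction n)
  case 0
  then show ?case using assms(1) ideal_one unfolding prime_ideal_in_def by auto
next
  case (Suc n)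
  then show ?case using assms(1,2,3) subring_power unfolding prime_ideal_in_def
    by (metis power_Suc)
qed

lemma prime_ideal_no_unit: "prime_ideal_in S P \<Longrightarrow> unit_in S u \<Longrightarrow> u \<notin> P"
  unfolding prime_ideal_in_def using ideal_unit by blast

lemma prime_elem_pid:
  assumes "subring S" "prime_elem_in S p"
  shows "prime_ideal_in S (pid S p)"
proof -
  have pS: "p \<in> S" using assms unfolding prime_elem_in_def by auto
  have "1 \<notin> pid S p"
  proof
    assume "1 \<in> pid S p"
    then obtain c where "c \<in> S" "1 = p * c" unfolding pid_def by auto
    then have "unit_in S p" using pS unfolding unit_in_def by auto
    then show False using assms(2) unfolding prime_elem_in_def by auto
  qed
  then have "pid S p \<noteq> S" using subringD(2)[OF assms(1)] by auto
  moreover have "\<forall>a\<in>S. \<forall>b\<in>S. a * b \<in> pid S p \<longrightarrow> a \<in> pid S p \<or> b \<in> pid S p"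
    using assms(2) unfolding prime_elem_in_def pid_def dvd_in_def by auto
  ultimately show ?thesis using pid_ideal[OF assms(1) pS] unfolding prime_ideal_in_def by auto
qed

lemma zero_prime: "subring S \<Longrightarrow> prime_ideal_in S {0}"
  unfolding prime_ideal_in_def ideal_in_def using subringD[of S] by auto

lemma ideal_adjoin:
  assumes "subring S" "ideal_in S P" "a \<in> S"
  shows "ideal_in S {p + d * a | p d. p \<in> P \<and> d \<in> S}" (is "ideal_in S ?J")
    and "P \<subseteq> {p + d * a | p d. p \<in> P \<and> d \<in> S}" "a \<in> {p + d * a | p d. p \<in> P \<and> d \<in> S}"
proof -
  note sr = subringD[OF assms(1)] and id = idealD[OF assms(2)]
  show "ideal_in S ?J"
  proof (rule ideal_inI)
    show "?J \<subseteq> S" using id(1) sr assms(3) by auto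
    show "0 \<in> ?J" using id(2) sr by (auto intro!: exI[of _ 0])
  next
    fix x y assume "x \<in> ?J" "y \<in> ?J"
    then obtain p1 d1 p2 d2 where "x = p1 + d1 * a" "y = p2 + d2 * a" "p1 \<in> P" "p2 \<in> P" "d1 \<in> S" "d2 \<in> S"
      by auto
    then have e1: "x + y = (p1 + p2) + (d1 + d2) * a" and e2: "x - y = (p1 - p2) + (d1 - d2) * a"
      by (simp_all add: algebra_simps)
    have "p1 + p2 \<in> P" "p1 - p2 \<in> P" "d1 + d2 \<in> S" "d1 - d2 \<in> S"
      using id sr \<open>p1 \<in> P\<close> \<open>p2 \<in> P\<close> \<open>d1 \<in> S\<close> \<open>d2 \<in> S\<close> by auto
    then show "x + y \<in> ?J" "x - y \<in> ?J" using e1 e2 by blast+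
  next
    fix s x assume "s \<in> S" "x \<in> ?J"
    then obtain p1 d1 where "x = p1 + d1 * a" "p1 \<in> P" "d1 \<in> S" by auto
    then have "s * x = s * p1 + (s * d1) * a" by (simp add: algebra_simps)
    moreover have "s * p1 \<in> P" "s * d1 \<in> S" using id sr \<open>s \<in> S\<close> \<open>p1 \<in> P\<close> \<open>d1 \<in> S\<close> by auto
    ultimately show "s * x \<in> ?J" by blast
  qed
  show "P \<subseteq> ?J"
  proof
    fix x assume "x \<in> P"
    moreover have "x = x + 0 * a" by simp
    ultimately show "x \<in> ?J" using sr by blast
  qed
  have "a = 0 + 1 * a" by simp
  then show "a \<in> ?J" using sr id by blast
qed

lemma maximal_prime:
  assumes "subring S" "maximal_ideal_in S M"
  shows "prime_ideal_in S M"
  unfolding prime_ideal_in_def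
proof (intro conjI ballI impI)
  show "ideal_in S M" "M \<noteq> S" using assms(2) unfolding maximal_ideal_in_def by auto
  fix a b assume ab: "a \<in> S" "b \<in> S" "a * b \<in> M"
  show "a \<in> M \<or> b \<in> M"
  proof (rule ccontr)
    assume "\<not> (a \<in> M \<or> b \<in> M)"
    let ?J = "{p + d * a | p d. p \<in> M \<and> d \<in> S}"
    have "?J = S" using ideal_adjoin[OF assms(1) \<open>ideal_in S M\<close> ab(1)] assms(2) \<open>\<not> (a \<in> M \<or> b \<in> M)\<close>
      unfolding maximal_ideal_in_def by blast
    then have "1 \<in> ?J" using subringD(2)[OF assms(1)] by simp
    then obtain p d where "1 = p + d * a" "p \<in> M" "d \<in> S" by blast
    then have "b = b * p + d * (a * b)" by (metis distrib_left mult.commute mult.left_commute mult_1_right)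
    also have "\<dots> \<in> M" using \<open>ideal_in S M\<close> ab \<open>p \<in> M\<close> \<open>d \<in> S\<close> idealD ideal_mult_right by metis
    finally show False using \<open>\<not> (a \<in> M \<or> b \<in> M)\<close> by auto
  qed
qed



lemma subring_sum:
  assumes "subring S" "finite A" "\<forall>a\<in>A. g a \<in> S"
  shows "sum g A \<in> S"
  using assms(2,3) by (induction A rule: finite_induct) (auto intro: subringD[OF assms(1)])

lemma gen_sub:
  assumes "subring S" "finite F" "F \<subseteq> S"
  shows "F \<subseteq> ideal_gen S F"
proof
  fix f assume f: "f \<in> F"
  let ?c = "\<lambda>g. if g = f then 1 else (0::'a)"
  have "(\<Sum>g\<in>F. ?c g * g) = (\<Sum>g\<in>F. if g = f then f else 0)"
    by (rule sum.cong) auto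
  also have "\<dots> = f" using f assms(2) by simp
  finally have "f = (\<Sum>g\<in>F. ?c g * g)" by simp
  moreover have "\<forall>g\<in>F. ?c g \<in> S" using subringD[OF assms(1)] by auto
  ultimately show "f \<in> ideal_gen S F" unfolding ideal_gen_def mem_Collect_eq by (intro exI[of _ ?c]) auto
qed

lemma gen_ideal:
  assumes "subring S" "finite F" "F \<subseteq> S"
  shows "ideal_in S (ideal_gen S F)"
proof (rule ideal_inI)
  note sr = subringD[OF assms(1)]
  show "ideal_gen S F \<subseteq> S"
  proof
    fix x assume "x \<in> ideal_gen S F"
    then obtain c where "x = (\<Sum>f\<in>F. c f * f)" "\<forall>f\<in>F. c f \<in> S" unfolding ideal_gen_def by auto
    then show "x \<in> S" using assms(2,3) subring_sum[OF assms(1) assms(2), of "\<lambda>f. c f * f"] sr by blast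
  qed
  have "(0::'a) = (\<Sum>f\<in>F. 0 * f)" by simp
  then show "0 \<in> ideal_gen S F" unfolding ideal_gen_def mem_Collect_eq using sr by (intro exI[of _ "\<lambda>f. 0"]) simp
next
  note sr = subringD[OF assms(1)]
  fix x y assume "x \<in> ideal_gen S F" "y \<in> ideal_gen S F"
  then obtain c d where c: "x = (\<Sum>f\<in>F. c f * f)" "\<forall>f\<in>F. c f \<in> S"
    and d: "y = (\<Sum>f\<in>F. d f * f)" "\<forall>f\<in>F. d f \<in> S" unfolding ideal_gen_def by auto
  have "x + y = (\<Sum>f\<in>F. (c f + d f) * f)" using c d by (simp add: sum.distrib distrib_right)
  moreover have "\<forall>f\<in>F. c f + d f \<in> S" using c d sr by auto
  ultimately show "x + y \<in> ideal_gen S F" unfolding ideal_gen_def mem_Collect_eq by (intro exI[of _ "\<lambda>f. c f + d f"]) simp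
  have "x - y = (\<Sum>f\<in>F. (c f - d f) * f)" using c d by (simp add: sum_subtractf left_diff_distrib)
  moreover have "\<forall>f\<in>F. c f - d f \<in> S" using c d sr by auto
  ultimately show "x - y \<in> ideal_gen S F" unfolding ideal_gen_def mem_Collect_eq by (intro exI[of _ "\<lambda>f. c f - d f"]) simp
next
  note sr = subringD[OF assms(1)]
  fix s x assume "s \<in> S" "x \<in> ideal_gen S F"
  then obtain c where c: "x = (\<Sum>f\<in>F. c f * f)" "\<forall>f\<in>F. c f \<in> S" unfolding ideal_gen_def by auto
  have "s * x = (\<Sum>f\<in>F. (s * c f) * f)" using c by (simp add: sum_distrib_left mult.assoc)
  moreover have "\<forall>f\<in>F. s * c f \<in> S" using c sr \<open>s \<in> S\<close> by auto
  ultimately show "s * x \<in> ideal_gen S F" unfolding ideal_gen_def mem_Collect_eq by (intro exI[of _ "\<lambda>f. s * c f"]) simp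
qed

lemma gen_least:
  assumes "ideal_in S I" "finite F" "F \<subseteq> I"
  shows "ideal_gen S F \<subseteq> I"
proof
  fix x assume "x \<in> ideal_gen S F"
  then obtain c where c: "x = (\<Sum>f\<in>F. c f * f)" "\<forall>f\<in>F. c f \<in> S" unfolding ideal_gen_def by auto
  show "x \<in> I" unfolding c(1)
    by (rule ideal_sum[OF assms(1,2)]) (use c(2) assms(3) idealD(5)[OF assms(1)] in blast)
qed

lemma zorn_ideal:
  assumes "subring S" "ideal_in S I" "\<forall>n. y ^ n \<notin> I"
  shows "\<exists>P. ideal_in S P \<and> I \<subseteq> P \<and> (\<forall>n. y ^ n \<notin> P) \<and>
            (\<forall>J. ideal_in S J \<and> P \<subseteq> J \<and> (\<forall>n. y ^ n \<notin> J) \<longrightarrow> J = P)"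
proof -
  define A where "A = {J. ideal_in S J \<and> I \<subseteq> J \<and> (\<forall>n. y ^ n \<notin> J)}"
  have "\<forall>C\<in>chains A. \<exists>U\<in>A. \<forall>X\<in>C. X \<subseteq> U"
  proof
    fix C assume C: "C \<in> chains A"
    show "\<exists>U\<in>A. \<forall>X\<in>C. X \<subseteq> U"
    proof (cases "C = {}")
      case True
      then show ?thesis using assms unfolding A_def by auto
    next
      case False
      have CA: "C \<subseteq> A" and ch: "\<forall>X\<in>C. \<forall>Y\<in>C. X \<subseteq> Y \<or> Y \<subseteq> X"
        using C unfolding chains_def chain_subset_def by auto
      have "ideal_in S (\<Union>C)"
      proof (rule ideal_inI)
        show "\<Union>C \<subseteq> S" using CA unfolding A_def ideal_in_def by auto
        obtain X where "X \<in> C" using False by auto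
        then show "0 \<in> \<Union>C" using CA unfolding A_def ideal_in_def by auto
      next
        fix x z assume "x \<in> \<Union>C" "z \<in> \<Union>C"
        then obtain X Z where XZ: "X \<in> C" "Z \<in> C" "x \<in> X" "z \<in> Z" by auto
        then have "x \<in> X \<and> z \<in> X \<and> X \<in> C \<or> x \<in> Z \<and> z \<in> Z \<and> Z \<in> C" using ch by blast
        then show "x + z \<in> \<Union>C" "x - z \<in> \<Union>C" using CA unfolding A_def ideal_in_def by blast+
      next
        fix s x assume "s \<in> S" "x \<in> \<Union>C"
        then show "s * x \<in> \<Union>C" using CA unfolding A_def ideal_in_def by blast
      qed
      moreover have "I \<subseteq> \<Union>C" using False CA unfolding A_def by auto
      moreover have "\<forall>n. y ^ n \<notin> \<Union>C" using CA unfolding A_def by auto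
      ultimately have "\<Union>C \<in> A" unfolding A_def by auto
      then show ?thesis by auto
    qed
  qed
  from Zorn_Lemma2[OF this] obtain M where "M \<in> A" "\<forall>X\<in>A. M \<subseteq> X \<longrightarrow> X = M" by auto
  then show ?thesis unfolding A_def by (intro exI[of _ M]) blast
qed

lemma zorn_prime:
  assumes "subring S" "ideal_in S P" "\<forall>n. y ^ n \<notin> P" "y \<in> S"
    and maxl: "\<forall>J. ideal_in S J \<and> P \<subseteq> J \<and> (\<forall>n. y ^ n \<notin> J) \<longrightarrow> J = P"
  shows "prime_ideal_in S P"
  unfolding prime_ideal_in_def
proof (intro conjI ballI impI)
  show "ideal_in S P" by fact
  show "P \<noteq> S" using assms(3)[rule_format, of 0] subringD(2)[OF assms(1)] by auto
  fix a b assume ab: "a \<in> S" "b \<in> S" "a * b \<in> P"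
  show "a \<in> P \<or> b \<in> P"
  proof (rule ccontr)
    assume nab: "\<not> (a \<in> P \<or> b \<in> P)"
    let ?Ja = "{p + d * a | p d. p \<in> P \<and> d \<in> S}"
    let ?Jb = "{p + d * b | p d. p \<in> P \<and> d \<in> S}"
    note ja = ideal_adjoin[OF assms(1,2) ab(1)] and jb = ideal_adjoin[OF assms(1,2) ab(2)]
    have "?Ja \<noteq> P" using ja(3) nab by auto
    then obtain i where "y ^ i \<in> ?Ja" using maxl ja(1,2) by blast
    then obtain p1 d1 where 1: "y ^ i = p1 + d1 * a" "p1 \<in> P" "d1 \<in> S" by auto
    have "?Jb \<noteq> P" using jb(3) nab by auto
    then obtain k where "y ^ k \<in> ?Jb" using maxl jb(1,2) by blast
    then obtain p2 d2 where 2: "y ^ k = p2 + d2 * b" "p2 \<in> P" "d2 \<in> S" by auto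
    have "y ^ (i + k) = p1 * p2 + p1 * (d2 * b) + p2 * (d1 * a) + (d1 * d2) * (a * b)"
      unfolding power_add 1(1) 2(1) by (simp add: algebra_simps)
    also have "\<dots> \<in> P"
    proof -
      note id = idealD[OF assms(2)]
      have Ps: "P \<subseteq> S" by (rule id(1))
      have "p1 * p2 \<in> P" using 1 2 Ps ideal_mult_right[OF assms(2)] by auto
      moreover have "p1 * (d2 * b) \<in> P" using 1 2 ab ideal_mult_right[OF assms(2)] subringD(5)[OF assms(1)] by auto
      moreover have "p2 * (d1 * a) \<in> P" using 1 2 ab ideal_mult_right[OF assms(2)] subringD(5)[OF assms(1)] by auto
      moreover have "(d1 * d2) * (a * b) \<in> P" using 1 2 ab id(5) subringD(5)[OF assms(1)] by auto
      ultimately show ?thesis using id(3) by auto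
    qed
    finally show False using assms(3) by auto
  qed
qed



locale locD =
  fixes D :: "'a::field set"
  assumes sub: "subring D" and loc: "local_ring D" and dim: "krull_dim_one D"
begin

definition m where "m = (THE M. maximal_ideal_in D M)"

lemma m_max: "maximal_ideal_in D m"
  unfolding m_def using loc unfolding local_ring_def by (rule theI')

lemma m_unique: "maximal_ideal_in D M \<Longrightarrow> M = m"
  using loc m_max unfolding local_ring_def by blast

lemma m_ideal: "ideal_in D m" using m_max unfolding maximal_ideal_in_def by auto

lemma m_prime: "prime_ideal_in D m" using maximal_prime[OF sub m_max] .

lemma m_sub: "m \<subseteq> D" using idealD(1)[OF m_ideal] .

lemma one_not_m: "1 \<notin> m"
  using ideal_one[OF m_ideal] m_max unfolding maximal_ideal_in_def by auto

lemma unit_not_m: "unit_in D x \<Longrightarrow> x \<notin> m"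
  using ideal_unit[OF m_ideal] m_max unfolding maximal_ideal_in_def by auto

lemma m_mult: "a \<in> D \<Longrightarrow> x \<in> m \<Longrightarrow> a * x \<in> m" "a \<in> D \<Longrightarrow> x \<in> m \<Longrightarrow> x * a \<in> m"
  using idealD(5)[OF m_ideal] ideal_mult_right[OF m_ideal] by auto

lemma nonunit_m:
  assumes "x \<in> D" "\<not> unit_in D x"
  shows "x \<in> m"
proof -
  have I: "ideal_in D (pid D x)" using pid_ideal[OF sub assms(1)] .
  have "\<forall>n. (1::'a) ^ n \<notin> pid D x"
  proof
    fix n
    show "(1::'a) ^ n \<notin> pid D x"
    proof
      assume "(1::'a) ^ n \<in> pid D x"
      then obtain c where "c \<in> D" "1 = x * c" unfolding pid_def by auto
      then show False using assms unfolding unit_in_def by auto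
    qed
  qed
  from zorn_ideal[OF sub I this] obtain P where P: "ideal_in D P" "pid D x \<subseteq> P" "\<forall>n. (1::'a) ^ n \<notin> P"
    "\<forall>J. ideal_in D J \<and> P \<subseteq> J \<and> (\<forall>n. (1::'a) ^ n \<notin> J) \<longrightarrow> J = P" by blast
  have "maximal_ideal_in D P"
    unfolding maximal_ideal_in_def
  proof (intro conjI allI impI)
    show "ideal_in D P" by fact
    show "P \<noteq> D" using P(3) subringD(2)[OF sub] by auto
    fix J assume J: "ideal_in D J \<and> P \<subseteq> J"
    show "J = P \<or> J = D"
    proof (cases "1 \<in> J")
      case True then show ?thesis using ideal_one J by auto
    next
      case False then show ?thesis using P(4) J by auto
    qed
  qed
  then have "P = m" by (rule m_unique)
  then show ?thesis using P(2) pid_mem[OF sub] by auto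
qed

lemma L2:
  assumes "x \<in> m" "x \<noteq> 0" "y \<in> m"
  shows "\<exists>n c. c \<in> D \<and> y ^ n = x * c"
proof (rule ccontr)
  assume "\<not> ?thesis"
  then have ny: "\<forall>n. y ^ n \<notin> pid D x" unfolding pid_def by auto
  have xD: "x \<in> D" "y \<in> D" using assms m_sub by auto
  from zorn_ideal[OF sub pid_ideal[OF sub xD(1)] ny] obtain P where P: "ideal_in D P" "pid D x \<subseteq> P" "\<forall>n. y ^ n \<notin> P"
    "\<forall>J. ideal_in D J \<and> P \<subseteq> J \<and> (\<forall>n. y ^ n \<notin> J) \<longrightarrow> J = P" by blast
  have Pp: "prime_ideal_in D P" using zorn_prime[OF sub P(1) P(3) xD(2) P(4)] .
  have xP: "x \<in> P" using P(2) pid_mem[OF sub] by auto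
  have "{0} \<subset> P" using xP assms(2) idealD(2)[OF P(1)] by auto
  moreover have "P \<subseteq> m"
  proof
    fix z assume "z \<in> P"
    then have "z \<in> D" "\<not> unit_in D z" using prime_ideal_no_unit[OF Pp] idealD(1)[OF P(1)] by auto
    then show "z \<in> m" by (rule nonunit_m)
  qed
  moreover have "y \<notin> P" using P(3)[rule_format, of 1] by simp
  ultimately have "{0} \<subset> P \<and> P \<subset> m" using assms(3) by auto
  then show False using dim zero_prime[OF sub] Pp m_prime unfolding krull_dim_one_def by blast
qed

lemma L2':
  assumes "x \<in> D" "x \<noteq> 0" "y \<in> m"
  shows "\<exists>n c. c \<in> D \<and> y ^ n = x * c"
proof (cases "unit_in D x")
  case True
  then show ?thesis by (intro exI[of _ 0] exI[of _ "inverse x"]) (auto simp: unit_in_iff)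
next
  case False
  then show ?thesis using L2 nonunit_m assms by blast
qed

lemma L1:
  assumes "quotient_field_is_L D" "s \<in> m"
  shows "\<exists>k. s ^ k * z \<in> D"
proof -
  obtain a b where ab: "a \<in> D" "b \<in> D" "b \<noteq> 0" "z = a / b" using assms(1) unfolding quotient_field_is_L_def by blast
  obtain n c where "c \<in> D" "s ^ n = b * c" using L2'[OF ab(2,3) assms(2)] by blast
  then have "s ^ n * z = c * a" using ab by (simp add: field_simps)
  then show ?thesis using \<open>c \<in> D\<close> ab(1) subringD(5)[OF sub] by metis
qed

end



lemma dvd_in_trans: "subring S \<Longrightarrow> dvd_in S a b \<Longrightarrow> dvd_in S b c \<Longrightarrow> dvd_in S a c"
  unfolding dvd_in_def by (metis mult.assoc subringD(5))

lemma dvd_in_refl: "subring S \<Longrightarrow> dvd_in S a a"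
  unfolding dvd_in_def using subringD(2) by force

lemma dvd_in_pid: "dvd_in S a b \<longleftrightarrow> b \<in> pid S a"
  unfolding dvd_in_def pid_def by auto

section \<open>Noetherian implies atomic\<close>

lemma noeth_wf:
  assumes sub: "subring S" and noeth: "noetherian S"
  shows "wf {(a,b). a \<in> S \<and> b \<in> S \<and> a \<noteq> 0 \<and> b \<noteq> 0 \<and> dvd_in S a b \<and> \<not> dvd_in S b a}"
    (is "wf ?r")
proof (unfold wf_iff_no_infinite_down_chain, rule notI)
  assume "\<exists>f. \<forall>i. (f (Suc i), f i) \<in> ?r"
  then obtain f where f: "\<And>i. (f (Suc i), f i) \<in> ?r" by blast
  then have fS: "\<And>i. f i \<in> S" by blast
  have mono: "dvd_in S (f j) (f i)" if "i \<le> j" for i j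
    using that
  proof (induction j rule: dec_induct)
    case base then show ?case using dvd_in_refl[OF sub] .
  next
    case (step j) then show ?case using f[of j] dvd_in_trans[OF sub] by blast
  qed
  define U where "U = {x \<in> S. \<exists>i. dvd_in S (f i) x}"
  have U: "ideal_in S U"
  proof (rule ideal_inI)
    show "U \<subseteq> S" unfolding U_def by auto
    show "0 \<in> U" unfolding U_def dvd_in_def using subringD(1)[OF sub] by force
  next
    fix x y assume "x \<in> U" "y \<in> U"
    then obtain i j where ij: "x \<in> S" "y \<in> S" "dvd_in S (f i) x" "dvd_in S (f j) y" unfolding U_def by auto
    then have "dvd_in S (f (i + j)) x" "dvd_in S (f (i + j)) y"
      using mono[of i "i+j"] mono[of j "i+j"] dvd_in_trans[OF sub] by auto
    then obtain c d where "c \<in> S" "d \<in> S" "x = f (i + j) * c" "y = f (i + j) * d" unfolding dvd_in_def by auto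
    then have "x + y = f (i+j) * (c + d)" "x - y = f (i+j) * (c - d)" "c + d \<in> S" "c - d \<in> S"
      using subringD[OF sub] by (auto simp: algebra_simps)
    then show "x + y \<in> U" "x - y \<in> U" unfolding U_def dvd_in_def using ij subringD[OF sub] by blast+
  next
    fix s x assume "s \<in> S" "x \<in> U"
    then obtain i c where "x \<in> S" "c \<in> S" "x = f i * c" unfolding U_def dvd_in_def by auto
    then have "s * x = f i * (s * c)" "s * c \<in> S" "s * x \<in> S" using subringD(5)[OF sub] fS[of i] \<open>s \<in> S\<close> by (auto simp: algebra_simps)
    then show "s * x \<in> U" unfolding U_def dvd_in_def by blast
  qed
  then obtain F where F: "finite F" "F \<subseteq> S" "U = ideal_gen S F" using noeth unfolding noetherian_def by blast
  have "\<forall>g\<in>F. \<exists>i. dvd_in S (f i) g" using gen_sub[OF sub F(1,2)] F(3) unfolding U_def by auto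
  then obtain ig where ig: "\<forall>g\<in>F. dvd_in S (f (ig g)) g" by metis
  define N where "N = (\<Sum>g\<in>F. ig g)"
  have "\<forall>g\<in>F. dvd_in S (f N) g"
  proof
    fix g assume "g \<in> F"
    then have "ig g \<le> N" unfolding N_def using F(1) by (simp add: member_le_sum)
    then show "dvd_in S (f N) g" using mono ig \<open>g \<in> F\<close> dvd_in_trans[OF sub] by blast
  qed
  then have "F \<subseteq> pid S (f N)" using dvd_in_pid by fast
  then have "U \<subseteq> pid S (f N)" using gen_least[OF pid_ideal[OF sub fS] F(1)] F(3) by auto
  moreover have "f (Suc N) \<in> U" unfolding U_def using fS dvd_in_refl[OF sub] by blast
  ultimately have "dvd_in S (f N) (f (Suc N))" using dvd_in_pid by fast
  then show False using f[of N] by auto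
qed

lemma noeth_atomic:
  assumes sub: "subring S" and noeth: "noetherian S"
  shows "atomic S"
  unfolding atomic_def
proof (intro ballI impI)
  let ?r = "{(a,b). a \<in> S \<and> b \<in> S \<and> a \<noteq> 0 \<and> b \<noteq> 0 \<and> dvd_in S a b \<and> \<not> dvd_in S b a}"
  fix x assume "x \<in> S" "x \<noteq> 0 \<and> \<not> unit_in S x"
  then show "\<exists>xs. factorization_in S xs x"
  proof (induction x rule: wf_induct[OF noeth_wf[OF sub noeth]])
    case (1 x)
    show ?case
    proof (cases "irreducible_in S x")
      case True
      then show ?thesis unfolding factorization_in_def by (intro exI[of _ "[x]"]) auto
    next
      case False
      then obtain a b where ab: "a \<in> S" "b \<in> S" "x = a * b" "\<not> unit_in S a" "\<not> unit_in S b"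
        using 1(2,3) unfolding irreducible_in_def by blast
      have nz: "a \<noteq> 0" "b \<noteq> 0" using ab 1(3) by auto
      have "(a, x) \<in> ?r"
      proof -
        have "\<not> dvd_in S x a"
        proof
          assume "dvd_in S x a"
          then obtain c where "c \<in> S" "a = x * c" unfolding dvd_in_def by auto
          then have "a * 1 = a * (b * c)" using ab by (simp add: algebra_simps)
          then have "b * c = 1" using nz by (metis mult_left_cancel)
          then show False using ab(4,5) \<open>c \<in> S\<close> ab(2) unfolding unit_in_def by blast
        qed
        then show ?thesis using ab nz 1 unfolding dvd_in_def by auto
      qed
      moreover have "(b, x) \<in> ?r"
      proof -
        have "\<not> dvd_in S x b"
        proof
          assume "dvd_in S x b"
          then obtain c where "c \<in> S" "b = x * c" unfolding dvd_in_def by auto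
          then have "b * 1 = b * (a * c)" using ab by (simp add: algebra_simps)
          then have "a * c = 1" using nz by (metis mult_left_cancel)
          then show False using ab(4,5) \<open>c \<in> S\<close> ab(1) unfolding unit_in_def by blast
        qed
        then show ?thesis using ab nz 1 unfolding dvd_in_def by (auto simp: mult.commute)
      qed
      ultimately obtain xs ys where "factorization_in S xs a" "factorization_in S ys b"
        using 1(1) ab nz by blast
      then have "factorization_in S (xs @ ys) x" using ab unfolding factorization_in_def by auto
      then show ?thesis by blast
    qed
  qed
qed

section \<open>Transfer of Noetherianity\<close>

lemma noeth_transfer:
  assumes subR: "subring R" and subA: "subring A" and RA: "R \<subseteq> A" and noeth: "noetherian A"
    and tR: "t \<in> R" and adj: "\<forall>a\<in>A. \<exists>j. \<forall>i\<ge>j. t ^ i * a \<in> R" and I: "ideal_in R I"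
  shows "\<exists>G. finite G \<and> G \<subseteq> I \<and> (\<forall>x\<in>I. \<exists>N. t ^ N * x \<in> ideal_gen R G)"
proof -
  note sR = subringD[OF subR] and sA = subringD[OF subA] and iI = idealD[OF I]
  have tpow: "t ^ n \<in> R" for n using subring_power[OF subR tR] .
  define J where "J = {x \<in> A. \<exists>k. t ^ k * x \<in> I}"
  have J: "ideal_in A J"
  proof (rule ideal_inI)
    show "J \<subseteq> A" unfolding J_def by auto
    show "0 \<in> J" unfolding J_def using sA iI by auto
  next
    fix x y assume "x \<in> J" "y \<in> J"
    then obtain k1 k2 where k: "x \<in> A" "y \<in> A" "t ^ k1 * x \<in> I" "t ^ k2 * y \<in> I" unfolding J_def by auto
    have e: "t ^ (k1 + k2) * (x + y) = t ^ k2 * (t ^ k1 * x) + t ^ k1 * (t ^ k2 * y)"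
      "t ^ (k1 + k2) * (x - y) = t ^ k2 * (t ^ k1 * x) - t ^ k1 * (t ^ k2 * y)"
      by (simp_all add: power_add algebra_simps)
    have "t ^ k2 * (t ^ k1 * x) \<in> I" "t ^ k1 * (t ^ k2 * y) \<in> I" using k iI tpow by auto
    then have "t ^ (k1 + k2) * (x + y) \<in> I" "t ^ (k1 + k2) * (x - y) \<in> I" unfolding e using iI by auto
    then show "x + y \<in> J" "x - y \<in> J" unfolding J_def using k sA by blast+
  next
    fix a x assume "a \<in> A" "x \<in> J"
    then obtain k where k: "x \<in> A" "t ^ k * x \<in> I" unfolding J_def by auto
    obtain j where "t ^ j * a \<in> R" using adj \<open>a \<in> A\<close> by blast
    have "t ^ (j + k) * (a * x) = (t ^ j * a) * (t ^ k * x)" by (simp add: power_add algebra_simps)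
    also have "\<dots> \<in> I" using iI \<open>t ^ j * a \<in> R\<close> k by auto
    finally show "a * x \<in> J" unfolding J_def using k \<open>a \<in> A\<close> sA by blast
  qed
  obtain F where F: "finite F" "F \<subseteq> A" "J = ideal_gen A F" using noeth J unfolding noetherian_def by blast
  have "\<forall>f\<in>F. \<exists>k. t ^ k * f \<in> I" using gen_sub[OF subA F(1,2)] F(3) unfolding J_def by auto
  then obtain kf where kf: "\<forall>f\<in>F. t ^ kf f * f \<in> I" by metis
  define K where "K = (\<Sum>f\<in>F. kf f)"
  have KI: "t ^ K * f \<in> I" if "f \<in> F" for f
  proof -
    have "kf f \<le> K" unfolding K_def using F(1) that by (simp add: member_le_sum)
    then have "t ^ K * f = t ^ (K - kf f) * (t ^ kf f * f)"
      by (metis (no_types, lifting) le_add_diff_inverse2 mult.assoc power_add)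
    also have "\<dots> \<in> I" using iI kf that tpow by auto
    finally show ?thesis .
  qed
  define G where "G = (\<lambda>f. t ^ K * f) ` F"
  have G: "finite G" "G \<subseteq> I" unfolding G_def using F(1) KI by auto
  have GR: "G \<subseteq> R" using G(2) iI(1) by auto
  have genG: "ideal_in R (ideal_gen R G)" using gen_ideal[OF subR G(1) GR] .
  have "\<forall>x\<in>I. \<exists>N. t ^ N * x \<in> ideal_gen R G"
  proof
    fix x assume "x \<in> I"
    then have "x \<in> J" unfolding J_def using iI(1) RA by (auto intro!: exI[of _ 0])
    then obtain c where c: "x = (\<Sum>f\<in>F. c f * f)" "\<forall>f\<in>F. c f \<in> A" unfolding F(3) ideal_gen_def by auto
    have "\<forall>f\<in>F. \<exists>j. \<forall>i\<ge>j. t ^ i * c f \<in> R" using adj c(2) by auto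
    then obtain jf where jf: "\<forall>f\<in>F. \<forall>i\<ge>jf f. t ^ i * c f \<in> R" by metis
    define JJ where "JJ = (\<Sum>f\<in>F. jf f)"
    have cR: "t ^ JJ * c f \<in> R" if "f \<in> F" for f
      using jf that F(1) unfolding JJ_def by (simp add: member_le_sum)
    have "t ^ (JJ + K) * x = (\<Sum>f\<in>F. (t ^ JJ * c f) * (t ^ K * f))"
      unfolding c(1) sum_distrib_left by (rule sum.cong) (simp_all add: power_add algebra_simps)
    also have "\<dots> \<in> ideal_gen R G"
    proof (rule ideal_sum[OF genG F(1)], intro ballI)
      fix f assume "f \<in> F"
      then have "t ^ K * f \<in> ideal_gen R G" using gen_sub[OF subR G(1) GR] unfolding G_def by auto
      then show "(t ^ JJ * c f) * (t ^ K * f) \<in> ideal_gen R G" using idealD(5)[OF genG] cR \<open>f \<in> F\<close> by auto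
    qed
    finally show "\<exists>N. t ^ N * x \<in> ideal_gen R G" by blast
  qed
  then show ?thesis using G by blast
qed

section \<open>Valuations\<close>

locale val =
  fixes v :: "'a::field \<Rightarrow> int"
  assumes vmult: "\<And>x y. x \<noteq> 0 \<Longrightarrow> y \<noteq> 0 \<Longrightarrow> v (x * y) = v x + v y"
    and vadd: "\<And>x y. x \<noteq> 0 \<Longrightarrow> y \<noteq> 0 \<Longrightarrow> x + y \<noteq> 0 \<Longrightarrow> v (x + y) \<ge> min (v x) (v y)"
begin

lemma v1: "v 1 = 0"
  using vmult[of 1 1] by simp

lemma vm1: "v (-1) = 0"
  using vmult[of "-1" "-1"] v1 by simp

lemma vneg: "x \<noteq> 0 \<Longrightarrow> v (- x) = v x"
  using vmult[of "-1" x] vm1 by simp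

lemma vinv: "x \<noteq> 0 \<Longrightarrow> v (inverse x) = - v x"
  using vmult[of x "inverse x"] v1 by simp

lemma vpow: "x \<noteq> 0 \<Longrightarrow> v (x ^ n) = int n * v x"
  by (induction n) (auto simp: v1 vmult algebra_simps)

lemma vdiv: "x \<noteq> 0 \<Longrightarrow> y \<noteq> 0 \<Longrightarrow> v (x / y) = v x - v y"
  by (simp add: divide_inverse vmult vinv)

lemma vsum_lt:
  assumes "a \<noteq> 0" "b \<noteq> 0" "v a < v b"
  shows "a + b \<noteq> 0" "v (a + b) = v a"
proof -
  show nz: "a + b \<noteq> 0"
  proof
    assume "a + b = 0"
    then have "a = - b" by (simp add: eq_neg_iff_add_eq_0)
    then show False using assms vneg by auto
  qed
  have "v (a + b) \<ge> v a" using vadd[OF assms(1,2) nz] assms(3) by simp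
  moreover have "v a \<ge> min (v (a + b)) (v (- b))"
    using vadd[OF nz, of "- b"] assms by (simp add: vneg)
  ultimately show "v (a + b) = v a" using assms(3) vneg[OF assms(2)] by auto
qed

end



locale setting = locD D + val v for D :: "'a::field set" and v +
  fixes V R :: "'a set" and \<pi> :: 'a
  assumes Vdef: "V = {x. x = 0 \<or> 0 \<le> v x}"
    and vsurj: "\<exists>t. t \<noteq> 0 \<and> v t = 1"
    and subV: "subring V"
    and qD: "quotient_field_is_L D"
    and noD: "noetherian D" and noV: "noetherian V"
    and Rdef: "R = D \<inter> V"
    and pV: "prime_elem_in V \<pi>" and pR: "prime_elem_in R \<pi>"
    and eA: "\<exists>x y. irreducible_in D x \<and> irreducible_in D y \<and> \<not> assoc_in D x y \<and>
                 irreducible_in R x \<and> irreducible_in R y"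
begin

lemma inV: "x \<in> V \<longleftrightarrow> x = 0 \<or> 0 \<le> v x" using Vdef by auto

lemma subR: "subring R"
  using sub subV unfolding Rdef subring_def by auto

lemma pi_basic: "\<pi> \<in> R" "\<pi> \<in> D" "\<pi> \<in> V" "\<pi> \<noteq> 0"
  using pR unfolding prime_elem_in_def Rdef by auto

lemma vpi: "v \<pi> = 1"
proof -
  obtain t where t: "t \<noteq> 0" "v t = 1" using vsurj by auto
  have "0 \<le> v \<pi>" using pi_basic inV by auto
  moreover have "v \<pi> \<noteq> 0"
  proof
    assume "v \<pi> = 0"
    then have "inverse \<pi> \<in> V" using inV vinv pi_basic by auto
    then have "unit_in V \<pi>" using pi_basic unfolding unit_in_iff by auto
    then show False using pV unfolding prime_elem_in_def by auto
  qed
  ultimately have ge: "v \<pi> \<ge> 1" by auto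
  have tV: "t \<in> V" and qV: "\<pi> / t \<in> V" using t ge inV vdiv pi_basic by auto
  have "dvd_in V \<pi> (t * (\<pi> / t))" using t pi_basic subringD(2)[OF subV] unfolding dvd_in_def
    by (intro bexI[of _ 1]) auto
  then have "dvd_in V \<pi> t \<or> dvd_in V \<pi> (\<pi> / t)" using pV tV qV unfolding prime_elem_in_def by blast
  then show ?thesis
  proof
    assume "dvd_in V \<pi> t"
    then obtain c where c: "c \<in> V" "t = \<pi> * c" unfolding dvd_in_def by auto
    then have "c \<noteq> 0" using t by auto
    then have "v t = v \<pi> + v c" using c vmult pi_basic by auto
    then show ?thesis using c \<open>c \<noteq> 0\<close> inV t ge by auto
  next
    assume "dvd_in V \<pi> (\<pi> / t)"
    then obtain c where c: "c \<in> V" "\<pi> / t = \<pi> * c" unfolding dvd_in_def by auto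
    then have "c = inverse t" using pi_basic t by (simp add: field_simps)
    then show ?thesis using c inV vinv t by auto
  qed
qed

lemma vpi_pow: "v (\<pi> ^ n) = int n" using vpow[OF pi_basic(4)] vpi by simp

lemma pi_pow: "\<pi> ^ n \<in> R" "\<pi> ^ n \<in> D" "\<pi> ^ n \<in> V" "\<pi> ^ n \<noteq> 0"
  using subring_power[OF subR pi_basic(1)] pi_basic(4) unfolding Rdef by auto

lemma R_sub: "R \<subseteq> D" "R \<subseteq> V" unfolding Rdef by auto

lemma vmem: "x \<in> V \<Longrightarrow> x \<noteq> 0 \<Longrightarrow> 0 \<le> v x" using inV by auto

lemma lemE:
  assumes "p \<in> D" "\<not> unit_in D p" "m \<subseteq> pid D p"
  shows False
proof -
  obtain x y where xy: "irreducible_in D x" "irreducible_in D y" "\<not> assoc_in D x y" using eA by blast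
  have fac: "\<exists>c. unit_in D c \<and> z = c * p" if "irreducible_in D z" for z
  proof -
    have "z \<in> m" using that nonunit_m unfolding irreducible_in_def by auto
    then obtain c where c: "c \<in> D" "z = p * c" using assms(3) unfolding pid_def by auto
    then have "unit_in D c" using that assms(1,2) unfolding irreducible_in_def by auto
    then show ?thesis using c by (auto simp: mult.commute)
  qed
  obtain c where c: "unit_in D c" "x = c * p" using fac xy(1) by blast
  obtain d where d: "unit_in D d" "y = d * p" using fac xy(2) by blast
  have "unit_in D (c * inverse d)" using c d unit_mult[OF sub] unit_inverse by blast
  moreover have "x = (c * inverse d) * y" using c d by (auto simp: unit_in_iff)
  ultimately show False using xy(3) unfolding assoc_in_def by blast
qed

lemma D_not_V: "\<not> D \<subseteq> V"
proof
  assume "D \<subseteq> V"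
  then have RD: "R = D" unfolding Rdef by auto
  then have pD: "prime_elem_in D \<pi>" using pR by simp
  then have pim: "\<pi> \<in> m" using nonunit_m unfolding prime_elem_in_def by auto
  have P: "prime_ideal_in D (pid D \<pi>)" using prime_elem_pid[OF sub pD] .
  have "pid D \<pi> \<subseteq> m" unfolding pid_def using m_mult(2) pim by auto
  moreover have "{0} \<subset> pid D \<pi>" using pid_mem[OF sub] pi_basic idealD(2)[OF pid_ideal[OF sub pi_basic(2)]] by auto
  ultimately have "m \<subseteq> pid D \<pi>" using dim P zero_prime[OF sub] m_prime unfolding krull_dim_one_def by blast
  then show False using lemE pD unfolding prime_elem_in_def by auto
qed

lemma pi_unit: "unit_in D \<pi>"
proof (rule ccontr)
  assume "\<not> unit_in D \<pi>"
  then have pim: "\<pi> \<in> m" using nonunit_m pi_basic by auto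
  obtain d where d: "d \<in> D" "d \<notin> V" using D_not_V by auto
  then have dnz: "d \<noteq> 0" and vd: "v d < 0" using inV by auto
  define n where "n = nat (- v d)"
  define s where "s = \<pi> ^ n * d"
  have n1: "n \<ge> 1" using vd unfolding n_def by auto
  have snz: "s \<noteq> 0" unfolding s_def using pi_pow dnz by auto
  have vs: "v s = 0" unfolding s_def using vmult[OF pi_pow(4) dnz] vpi_pow vd n_def by auto
  have sm: "s \<in> m" unfolding s_def using ideal_power[OF m_ideal sub pim n1] m_mult(2) d by auto
  have sR: "s \<in> R" using sm m_sub vs inV unfolding Rdef by auto
  have key: "\<And>c. c \<in> D \<Longrightarrow> \<pi> ^ N = s * c \<Longrightarrow> False" for N
  proof (induction N)
    case 0
    then have "unit_in D s" using sm m_sub unfolding unit_in_def by auto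
    then show ?case using unit_not_m sm by auto
  next
    case (Suc N c)
    have cnz: "c \<noteq> 0" using Suc.prems pi_pow(4)[of "Suc N"] by auto
    have "v (\<pi> ^ Suc N) = v s + v c" using Suc.prems vmult snz cnz by auto
    then have "v c \<ge> 0" using vs vpi_pow[of "Suc N"] by simp
    then have cR: "c \<in> R" using Suc.prems inV unfolding Rdef by auto
    have "dvd_in R \<pi> (s * c)" unfolding dvd_in_def using Suc.prems pi_pow(1)[of N]
      by (intro bexI[of _ "\<pi> ^ N"]) auto
    then have "dvd_in R \<pi> s \<or> dvd_in R \<pi> c" using pR sR cR unfolding prime_elem_in_def by blast
    then show False
    proof
      assume "dvd_in R \<pi> s"
      then obtain e where e: "e \<in> R" "s = \<pi> * e" unfolding dvd_in_def by auto
      then have "e \<noteq> 0" using snz by auto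
      then have "v s = 1 + v e" using e vmult pi_basic vpi by auto
      moreover have "v e \<ge> 0" using e \<open>e \<noteq> 0\<close> R_sub inV by auto
      ultimately show False using vs by auto
    next
      assume "dvd_in R \<pi> c"
      then obtain e where e: "e \<in> R" "c = \<pi> * e" unfolding dvd_in_def by auto
      then have "\<pi> * \<pi> ^ N = \<pi> * (s * e)" using Suc.prems by (simp add: algebra_simps)
      then have "\<pi> ^ N = s * e" using pi_basic(4) by simp
      then show False using Suc.IH e R_sub by auto
    qed
  qed
  obtain N c where "c \<in> D" "\<pi> ^ N = s * c" using L2[OF sm snz pim] by blast
  then show False using key by blast
qed

lemma ipi: "inverse \<pi> \<in> D" "\<pi> \<notin> m"
  using pi_unit unit_not_m unfolding unit_in_iff by auto

lemma exists_s: "\<exists>s. s \<in> m \<and> s \<in> V \<and> s \<noteq> 0 \<and> v s = 0"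
proof -
  obtain x where "irreducible_in D x" using eA by blast
  then have a: "x \<in> m" "x \<noteq> 0" using nonunit_m unfolding irreducible_in_def by auto
  show ?thesis
  proof (cases "v x \<ge> 0")
    case True
    define s where "s = x * inverse \<pi> ^ nat (v x)"
    have "inverse \<pi> ^ nat (v x) \<in> D" using subring_power[OF sub ipi(1)] .
    then have "s \<in> m" unfolding s_def using m_mult(2) a by auto
    moreover have "s \<noteq> 0" unfolding s_def using a pi_basic by auto
    moreover have "v s = 0" unfolding s_def using True a pi_basic
      by (simp add: vmult vpow vinv vpi power_inverse[symmetric])
    ultimately show ?thesis using inV by auto
  next
    case False
    define s where "s = x * \<pi> ^ nat (- v x)"
    have "s \<in> m" unfolding s_def using m_mult(2) a pi_pow by auto
    moreover have "s \<noteq> 0" unfolding s_def using a pi_basic by auto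
    moreover have "v s = 0" unfolding s_def using False a pi_basic
      by (simp add: vmult vpow vpi)
    ultimately show ?thesis using inV by auto
  qed
qed

definition s where "s = (SOME s. s \<in> m \<and> s \<in> V \<and> s \<noteq> 0 \<and> v s = 0)"

lemma s_props: "s \<in> m" "s \<in> V" "s \<noteq> 0" "v s = 0" "s \<in> R" "s \<in> D"
  using someI_ex[OF exists_s] m_sub unfolding s_def[symmetric] Rdef by auto

end



context setting
begin

lemma adjD: "y \<in> D \<Longrightarrow> \<exists>j. \<forall>i\<ge>j. \<pi> ^ i * y \<in> R"
proof -
  assume yD: "y \<in> D"
  show ?thesis
  proof (cases "y = 0")
    case True then show ?thesis using subringD(1)[OF subR] by auto
  next
    case False
    show ?thesis
    proof (intro exI allI impI)
      fix i assume "nat (- v y) \<le> i"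
      then have "v (\<pi> ^ i * y) \<ge> 0" using vmult[OF pi_pow(4) False] vpi_pow by auto
      then show "\<pi> ^ i * y \<in> R" using yD pi_pow subringD(5)[OF sub] inV unfolding Rdef by auto
    qed
  qed
qed

lemma adjV: "y \<in> V \<Longrightarrow> \<exists>k. \<forall>i\<ge>k. s ^ i * y \<in> R"
proof -
  assume yV: "y \<in> V"
  obtain k where k: "s ^ k * y \<in> D" using L1[OF qD s_props(1)] by blast
  show ?thesis
  proof (intro exI allI impI)
    fix i assume "k \<le> i"
    then have e: "s ^ i * y = s ^ (i - k) * (s ^ k * y)"
      by (metis (no_types, lifting) le_add_diff_inverse2 mult.assoc power_add)
    have "s ^ i * y \<in> D" by (subst e, rule subringD(5)[OF sub subring_power[OF sub s_props(6)] k])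
    moreover have "s ^ i * y \<in> V" using yV subring_power[OF subV s_props(2)] subringD(5)[OF subV] by auto
    ultimately show "s ^ i * y \<in> R" unfolding Rdef by auto
  qed
qed

lemma sum_unit:
  assumes "k \<ge> 1" "j \<ge> 1"
  shows "unit_in R (s ^ k + \<pi> ^ j)"
proof -
  have sk: "s ^ k \<noteq> 0" "v (s ^ k) = 0" using s_props vpow by auto
  have "v (s ^ k) < v (\<pi> ^ j)" using sk vpi_pow assms by auto
  note vl = vsum_lt[OF sk(1) pi_pow(4) this]
  have inV1: "s ^ k + \<pi> ^ j \<in> V" "inverse (s ^ k + \<pi> ^ j) \<in> V"
    using vl sk vinv inV by auto
  have skm: "s ^ k \<in> m" using ideal_power[OF m_ideal sub s_props(1) assms(1)] .
  have "s ^ k + \<pi> ^ j \<notin> m"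
  proof
    assume "s ^ k + \<pi> ^ j \<in> m"
    then have "(s ^ k + \<pi> ^ j) - s ^ k \<in> m" using idealD(4)[OF m_ideal] skm by blast
    then have "\<pi> ^ j \<in> m" by simp
    then show False using unit_not_m unit_power[OF sub pi_unit] by blast
  qed
  moreover have sD: "s ^ k + \<pi> ^ j \<in> D" using skm m_sub pi_pow subringD(3)[OF sub] by auto
  ultimately have "unit_in D (s ^ k + \<pi> ^ j)" using nonunit_m by blast
  then have "inverse (s ^ k + \<pi> ^ j) \<in> D" unfolding unit_in_iff by auto
  then show ?thesis using inV1 sD vl unfolding unit_in_iff Rdef by auto
qed

definition M1 where "M1 = m \<inter> R"
definition M2 where "M2 = pid R \<pi>"

lemma M2_char: "y \<in> M2 \<longleftrightarrow> y \<in> R \<and> (y = 0 \<or> v y \<ge> 1)"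
proof
  assume "y \<in> M2"
  then obtain c where c: "c \<in> R" "y = \<pi> * c" unfolding M2_def pid_def by auto
  then have yR: "y \<in> R" using subringD(5)[OF subR] pi_basic by auto
  show "y \<in> R \<and> (y = 0 \<or> v y \<ge> 1)"
  proof (cases "c = 0")
    case True then show ?thesis using c yR by auto
  next
    case False
    then have "v y = 1 + v c" using c vmult pi_basic vpi by auto
    moreover have "v c \<ge> 0" using c False R_sub inV by auto
    ultimately show ?thesis using yR by auto
  qed
next
  assume a: "y \<in> R \<and> (y = 0 \<or> v y \<ge> 1)"
  have "inverse \<pi> * y \<in> D" using a ipi R_sub subringD(5)[OF sub] by auto
  moreover have "inverse \<pi> * y \<in> V"
  proof (cases "y = 0")
    case True then show ?thesis using inV by auto
  next
    case False
    then have "v (inverse \<pi> * y) = v y - 1" using vmult vinv vpi pi_basic by auto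
    then show ?thesis using a False inV by auto
  qed
  ultimately have "inverse \<pi> * y \<in> R" unfolding Rdef by auto
  moreover have "y = \<pi> * (inverse \<pi> * y)" using pi_basic by simp
  ultimately show "y \<in> M2" unfolding M2_def pid_def by blast
qed

lemma notM2: "y \<in> R \<Longrightarrow> y \<notin> M2 \<Longrightarrow> y \<noteq> 0 \<and> v y = 0 \<and> inverse y \<in> V"
  using M2_char[of y] R_sub inV vinv by fastforce

lemma notM1: "y \<in> R \<Longrightarrow> y \<notin> M1 \<Longrightarrow> y \<noteq> 0 \<and> inverse y \<in> D"
proof -
  assume a: "y \<in> R" "y \<notin> M1"
  then have "y \<notin> m" "y \<in> D" unfolding M1_def using R_sub by auto
  then have "unit_in D y" using nonunit_m by blast
  then show ?thesis unfolding unit_in_iff by auto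
qed

lemma M2_ideal: "ideal_in R M2" unfolding M2_def using pid_ideal[OF subR pi_basic(1)] .

lemma M1_ideal: "ideal_in R M1"
proof (rule ideal_inI)
  show "M1 \<subseteq> R" "0 \<in> M1" unfolding M1_def using idealD(2)[OF m_ideal] subringD(1)[OF subR] by auto
next
  fix x y assume "x \<in> M1" "y \<in> M1"
  then show "x + y \<in> M1" "x - y \<in> M1" unfolding M1_def using idealD[OF m_ideal] subringD[OF subR] by auto
next
  fix a x assume "a \<in> R" "x \<in> M1"
  then show "a * x \<in> M1" unfolding M1_def using m_mult R_sub subringD[OF subR] by auto
qed

lemma sM: "s \<in> M1" "s \<notin> M2"
  using s_props M2_char unfolding M1_def by auto

lemma piM: "\<pi> \<in> M2" "\<pi> \<notin> M1"
  using pid_mem[OF subR] ipi unfolding M1_def M2_def by auto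

lemma M1_prime: "prime_ideal_in R M1"
  unfolding prime_ideal_in_def
proof (intro conjI ballI impI)
  show "ideal_in R M1" by (rule M1_ideal)
  show "M1 \<noteq> R" using one_not_m subringD(2)[OF subR] unfolding M1_def by auto
  fix a b assume "a \<in> R" "b \<in> R" "a * b \<in> M1"
  then show "a \<in> M1 \<or> b \<in> M1" using m_prime R_sub unfolding M1_def prime_ideal_in_def by blast
qed

lemma M2_prime: "prime_ideal_in R M2" unfolding M2_def using prime_elem_pid[OF subR pR] .

lemma classify:
  assumes P: "prime_ideal_in R P" "P \<noteq> {0}"
  shows "P = M1 \<or> P = M2"
proof -
  have PI: "ideal_in R P" using P unfolding prime_ideal_in_def by auto
  note iP = idealD[OF PI]
  have Pprime: "\<And>a b. a \<in> R \<Longrightarrow> b \<in> R \<Longrightarrow> a * b \<in> P \<Longrightarrow> a \<in> P \<or> b \<in> P"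
    using P unfolding prime_ideal_in_def by blast
  show ?thesis
  proof (cases "\<pi> \<in> P")
    case True
    have "M2 \<subseteq> P" unfolding M2_def pid_def using True ideal_mult_right[OF PI] by auto
    moreover have "P \<subseteq> M2"
    proof
      fix y assume yP: "y \<in> P"
      show "y \<in> M2"
      proof (rule ccontr)
        assume "y \<notin> M2"
        moreover have yR: "y \<in> R" using yP iP by auto
        ultimately have iy: "inverse y \<in> V" "y \<noteq> 0" using notM2 by auto
        obtain k where k: "\<forall>i\<ge>k. s ^ i * inverse y \<in> R" using adjV[OF iy(1)] by blast
        have "s ^ (k + 1) = y * (s ^ (k + 1) * inverse y)" using iy by simp
        also have "\<dots> \<in> P" by (rule ideal_mult_right[OF PI k[rule_format, OF le_add1] yP])
        finally have "s \<in> P" using prime_ideal_power[OF P(1) subR s_props(5)] by blast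
        then have "s ^ 1 + \<pi> ^ 1 \<in> P" using True iP by auto
        then show False using prime_ideal_no_unit[OF P(1) sum_unit[of 1 1]] by simp
      qed
    qed
    ultimately show ?thesis by auto
  next
    case False
    have PM1: "P \<subseteq> M1"
    proof
      fix y assume yP: "y \<in> P"
      show "y \<in> M1"
      proof (rule ccontr)
        assume "y \<notin> M1"
        moreover have yR: "y \<in> R" using yP iP by auto
        ultimately have iy: "inverse y \<in> D" "y \<noteq> 0" using notM1 by auto
        obtain j where j: "\<forall>i\<ge>j. \<pi> ^ i * inverse y \<in> R" using adjD[OF iy(1)] by blast
        have "\<pi> ^ j = y * (\<pi> ^ j * inverse y)" using iy by simp
        also have "\<dots> \<in> P" using ideal_mult_right[OF PI _ yP] j by auto
        finally show False using prime_ideal_power[OF P(1) subR pi_basic(1)] False by blast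
      qed
    qed
    moreover have "M1 \<subseteq> P"
    proof
      fix y assume yM: "y \<in> M1"
      obtain x where x: "x \<in> P" "x \<noteq> 0" using P(2) iP(2) by blast
      then have xm: "x \<in> m" using PM1 unfolding M1_def by auto
      have ym: "y \<in> m" "y \<in> R" using yM unfolding M1_def by auto
      obtain n c where c: "c \<in> D" "y ^ n = x * c" using L2[OF xm x(2) ym(1)] by blast
      obtain j where j: "\<forall>i\<ge>j. \<pi> ^ i * c \<in> R" using adjD[OF c(1)] by blast
      have "\<pi> ^ j * y ^ n = x * (\<pi> ^ j * c)" using c by (simp add: algebra_simps)
      also have "\<dots> \<in> P" by (rule ideal_mult_right[OF PI j[rule_format, OF order_refl] x(1)])
      finally have "\<pi> ^ j \<in> P \<or> y ^ n \<in> P" using Pprime pi_pow subring_power[OF subR ym(2)] by blast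
      then show "y \<in> P" using prime_ideal_power[OF P(1) subR] pi_basic ym False by blast
    qed
    ultimately show ?thesis by auto
  qed
qed

lemma M1_max: "maximal_ideal_in R M1"
  unfolding maximal_ideal_in_def
proof (intro conjI allI impI)
  show "ideal_in R M1" "M1 \<noteq> R" using M1_prime unfolding prime_ideal_in_def by auto
  fix J assume J: "ideal_in R J \<and> M1 \<subseteq> J"
  show "J = M1 \<or> J = R"
  proof (rule ccontr)
    assume "\<not> (J = M1 \<or> J = R)"
    then obtain y where y: "y \<in> J" "y \<notin> M1" using J by auto
    then have yR: "y \<in> R" using J idealD(1) by blast
    then have iy: "inverse y \<in> D" "y \<noteq> 0" using notM1 y by auto
    obtain j where j: "\<forall>i\<ge>j. \<pi> ^ i * inverse y \<in> R" using adjD[OF iy(1)] by blast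
    have "\<pi> ^ (j + 1) = y * (\<pi> ^ (j + 1) * inverse y)" using iy by simp
    also have "\<dots> \<in> J" by (rule ideal_mult_right[OF conjunct1[OF J] j[rule_format, OF le_add1] y(1)])
    finally have pj: "\<pi> ^ (j + 1) \<in> J" .
    have sJ: "s ^ 1 \<in> J" using sM J by auto
    have "s ^ 1 + \<pi> ^ (j + 1) \<in> J" by (rule idealD(3)[OF conjunct1[OF J] sJ pj])
    then have "J = R" using ideal_unit[OF conjunct1[OF J] sum_unit[of 1 "j+1"]] by simp
    then show False using \<open>\<not> (J = M1 \<or> J = R)\<close> by auto
  qed
qed

lemma M2_max: "maximal_ideal_in R M2"
  unfolding maximal_ideal_in_def
proof (intro conjI allI impI)
  show "ideal_in R M2" "M2 \<noteq> R" using M2_prime unfolding prime_ideal_in_def by auto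
  fix J assume J: "ideal_in R J \<and> M2 \<subseteq> J"
  show "J = M2 \<or> J = R"
  proof (rule ccontr)
    assume "\<not> (J = M2 \<or> J = R)"
    then obtain y where y: "y \<in> J" "y \<notin> M2" using J by auto
    then have yR: "y \<in> R" using J idealD(1) by blast
    then have iy: "inverse y \<in> V" "y \<noteq> 0" using notM2 y by auto
    obtain k where k: "\<forall>i\<ge>k. s ^ i * inverse y \<in> R" using adjV[OF iy(1)] by blast
    have "s ^ (k + 1) = y * (s ^ (k + 1) * inverse y)" using iy by simp
    also have "\<dots> \<in> J" by (rule ideal_mult_right[OF conjunct1[OF J] k[rule_format, OF le_add1] y(1)])
    finally have sk: "s ^ (k + 1) \<in> J" .
    have pJ: "\<pi> ^ 1 \<in> J" using piM J by auto
    have "s ^ (k + 1) + \<pi> ^ 1 \<in> J" by (rule idealD(3)[OF conjunct1[OF J] sk pJ])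
    then have "J = R" using ideal_unit[OF conjunct1[OF J] sum_unit[of "k+1" 1]] by simp
    then show False using \<open>\<not> (J = M2 \<or> J = R)\<close> by auto
  qed
qed

lemma M12: "M1 \<noteq> M2" "\<not> M1 \<subseteq> M2" "\<not> M2 \<subseteq> M1" using sM piM by auto

lemma max_ideals: "{M. maximal_ideal_in R M} = {M1, M2}"
proof (intro equalityI subsetI)
  fix M assume "M \<in> {M. maximal_ideal_in R M}"
  then have M: "maximal_ideal_in R M" by auto
  have "M \<noteq> {0}"
  proof
    assume "M = {0}"
    then have "M \<subseteq> M2" using idealD(2)[OF M2_ideal] by auto
    then have "M2 = M \<or> M2 = R" using M M2_ideal unfolding maximal_ideal_in_def by auto
    then show False using piM pi_basic \<open>M = {0}\<close> M2_max unfolding maximal_ideal_in_def by auto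
  qed
  then show "M \<in> {M1, M2}" using classify maximal_prime[OF subR M] by auto
qed (use M1_max M2_max in auto)

lemma card_max: "card {M. maximal_ideal_in R M} = 2"
  using max_ideals M12 by simp

lemma krullR: "krull_dim_one R"
  unfolding krull_dim_one_def
proof (intro conjI)
  show "\<exists>P Q. prime_ideal_in R P \<and> prime_ideal_in R Q \<and> P \<subset> Q"
    using zero_prime[OF subR] M2_prime piM pi_basic idealD(2)[OF M2_ideal] by blast
  show "\<not> (\<exists>P Q T. prime_ideal_in R P \<and> prime_ideal_in R Q \<and> prime_ideal_in R T \<and> P \<subset> Q \<and> Q \<subset> T)"
  proof
    assume "\<exists>P Q T. prime_ideal_in R P \<and> prime_ideal_in R Q \<and> prime_ideal_in R T \<and> P \<subset> Q \<and> Q \<subset> T"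
    then obtain P Q T where PQT: "prime_ideal_in R P" "prime_ideal_in R Q" "prime_ideal_in R T" "P \<subset> Q" "Q \<subset> T"
      by blast
    have "0 \<in> P" using PQT(1) idealD(2) unfolding prime_ideal_in_def by auto
    then have "Q \<noteq> {0}" "T \<noteq> {0}" using PQT(4,5) by auto
    then have "Q \<in> {M1, M2}" "T \<in> {M1, M2}" using classify PQT by auto
    then show False using PQT(5) M12 by auto
  qed
qed

end



lemma prod_assoc:
  assumes "subring S" "\<forall>a\<in>set xs. assoc_in S a r"
  shows "\<exists>u. unit_in S u \<and> prod_list xs = u * r ^ length xs"
  using assms(2)
proof (induction xs)
  case Nil then show ?case using unit_one[OF assms(1)] by auto
next
  case (Cons a xs)
  then obtain u where u: "unit_in S u" "prod_list xs = u * r ^ length xs" by auto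
  obtain w where w: "unit_in S w" "a = w * r" using Cons.prems unfolding assoc_in_def by auto
  have "prod_list (a # xs) = (w * u) * r ^ length (a # xs)" using u w by (simp add: algebra_simps)
  then show ?case using unit_mult[OF assms(1) w(1) u(1)] by blast
qed

context setting
begin

lemma noethR: "noetherian R"
  unfolding noetherian_def
proof (intro allI impI)
  fix I assume I: "ideal_in R I"
  have aD: "\<forall>a\<in>D. \<exists>j. \<forall>i\<ge>j. \<pi> ^ i * a \<in> R" using adjD by blast
  have aV: "\<forall>a\<in>V. \<exists>j. \<forall>i\<ge>j. s ^ i * a \<in> R" using adjV by blast
  obtain G1 where G1: "finite G1" "G1 \<subseteq> I" "\<forall>x\<in>I. \<exists>N. \<pi> ^ N * x \<in> ideal_gen R G1"
    using noeth_transfer[OF subR sub R_sub(1) noD pi_basic(1) aD I] by blast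
  obtain G2 where G2: "finite G2" "G2 \<subseteq> I" "\<forall>x\<in>I. \<exists>N. s ^ N * x \<in> ideal_gen R G2"
    using noeth_transfer[OF subR subV R_sub(2) noV s_props(5) aV I] by blast
  define F where "F = G1 \<union> G2"
  have F: "finite F" "F \<subseteq> I" "F \<subseteq> R" using G1 G2 idealD(1)[OF I] unfolding F_def by auto
  have gF: "ideal_in R (ideal_gen R F)" using gen_ideal[OF subR F(1,3)] .
  have FgF: "F \<subseteq> ideal_gen R F" using gen_sub[OF subR F(1,3)] .
  have g1: "ideal_gen R G1 \<subseteq> ideal_gen R F" using gen_least[OF gF G1(1)] FgF unfolding F_def by auto
  have g2: "ideal_gen R G2 \<subseteq> ideal_gen R F" using gen_least[OF gF G2(1)] FgF unfolding F_def by auto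
  have "I \<subseteq> ideal_gen R F"
  proof
    fix x assume xI: "x \<in> I"
    then have xR: "x \<in> R" using idealD(1)[OF I] by auto
    obtain N where N: "\<pi> ^ N * x \<in> ideal_gen R F" using G1(3) xI g1 by blast
    obtain M where M: "s ^ M * x \<in> ideal_gen R F" using G2(3) xI g2 by blast
    have a: "\<pi> * (\<pi> ^ N * x) \<in> ideal_gen R F" using idealD(5)[OF gF pi_basic(1) N] .
    have b: "s * (s ^ M * x) \<in> ideal_gen R F" using idealD(5)[OF gF s_props(5) M] .
    have "(s ^ (M + 1) + \<pi> ^ (N + 1)) * x = s * (s ^ M * x) + \<pi> * (\<pi> ^ N * x)"
      by (simp add: algebra_simps)
    also have "\<dots> \<in> ideal_gen R F" using idealD(3)[OF gF b a] .
    finally have c: "(s ^ (M + 1) + \<pi> ^ (N + 1)) * x \<in> ideal_gen R F" .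
    have u: "unit_in R (s ^ (M + 1) + \<pi> ^ (N + 1))" using sum_unit[of "M+1" "N+1"] by simp
    then have iu: "inverse (s ^ (M + 1) + \<pi> ^ (N + 1)) \<in> R" "s ^ (M + 1) + \<pi> ^ (N + 1) \<noteq> 0"
      unfolding unit_in_iff by auto
    have "x = inverse (s ^ (M + 1) + \<pi> ^ (N + 1)) * ((s ^ (M + 1) + \<pi> ^ (N + 1)) * x)"
      using iu(2) by simp
    also have "\<dots> \<in> ideal_gen R F" using idealD(5)[OF gF iu(1) c] .
    finally show "x \<in> ideal_gen R F" .
  qed
  moreover have "ideal_gen R F \<subseteq> I" using gen_least[OF I F(1,2)] .
  ultimately show "\<exists>F. finite F \<and> F \<subseteq> R \<and> I = ideal_gen R F" using F by blast
qed

lemma atomicR: "atomic R" using noeth_atomic[OF subR noethR] .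

lemma unitR_D: "unit_in R u \<Longrightarrow> unit_in D u"
  using R_sub unfolding unit_in_iff by auto

lemma primes_assoc:
  assumes p: "prime_elem_in R p"
  shows "assoc_in R p \<pi>"
proof -
  have pR': "p \<in> R" "p \<noteq> 0" using p unfolding prime_elem_in_def by auto
  have P: "prime_ideal_in R (pid R p)" using prime_elem_pid[OF subR p] .
  have "pid R p \<noteq> {0}" using pid_mem[OF subR, of p] pR' by auto
  then have "pid R p = M1 \<or> pid R p = M2" using classify P by auto
  then show ?thesis
  proof
    assume eq: "pid R p = M1"
    have "m \<subseteq> pid D p"
    proof
      fix y assume ym: "y \<in> m"
      then obtain j where j: "\<forall>i\<ge>j. \<pi> ^ i * y \<in> R" using adjD m_sub by blast
      have "\<pi> ^ j * y \<in> m" using m_mult(1) pi_pow ym by auto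
      then have "\<pi> ^ j * y \<in> M1" using j unfolding M1_def by auto
      then obtain c where c: "c \<in> R" "\<pi> ^ j * y = p * c" using eq unfolding pid_def by auto
      have "y = p * (c * inverse \<pi> ^ j)" using c(2) pi_pow(4)[of j]
        by (simp add: field_simps power_inverse)
      moreover have "c * inverse \<pi> ^ j \<in> D"
        using c(1) R_sub subring_power[OF sub ipi(1)] subringD(5)[OF sub] by auto
      ultimately show "y \<in> pid D p" unfolding pid_def by blast
    qed
    moreover have "p \<in> M1" using eq pid_mem[OF subR] by auto
    then have "p \<in> D" "\<not> unit_in D p" using unit_not_m m_sub unfolding M1_def by auto
    ultimately show ?thesis using lemE by blast
  next
    assume eq: "pid R p = M2"
    then have "\<pi> \<in> pid R p" using piM by auto
    then obtain c where c: "c \<in> R" "\<pi> = p * c" unfolding pid_def by auto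
    have "p \<in> M2" using eq pid_mem[OF subR] by auto
    then obtain d where d: "d \<in> R" "p = \<pi> * d" unfolding M2_def pid_def by auto
    have "\<pi> * 1 = \<pi> * (d * c)" using c d by (simp add: algebra_simps)
    then have "d * c = 1" using pi_basic(4) by (metis mult_left_cancel)
    then have "unit_in R d" using d c unfolding unit_in_def by auto
    then show ?thesis using d unfolding assoc_in_def by (auto simp: mult.commute)
  qed
qed

lemma exists_irr: "\<exists>r. irreducible_in R r \<and> \<not> assoc_in R r \<pi>"
proof (rule ccontr)
  assume a: "\<not> ?thesis"
  obtain x y where xy: "irreducible_in D x" "irreducible_in D y" "\<not> assoc_in D x y"
    "irreducible_in R x" "irreducible_in R y" using eA by blast
  obtain u where u: "unit_in R u" "x = u * \<pi>" using a xy unfolding assoc_in_def by blast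
  obtain w where w: "unit_in R w" "y = w * \<pi>" using a xy unfolding assoc_in_def by blast
  have "unit_in D (u * inverse w)" using unit_mult[OF sub unitR_D[OF u(1)] unit_inverse[OF unitR_D[OF w(1)]]] .
  moreover have "x = (u * inverse w) * y" using u w by (auto simp: unit_in_iff)
  ultimately show False using xy(3) unfolding assoc_in_def by blast
qed

lemma normalize: "z \<in> D \<Longrightarrow> z \<noteq> 0 \<Longrightarrow> \<exists>e. unit_in D e \<and> z * e \<in> R \<and> v (z * e) = 0"
proof -
  assume z: "z \<in> D" "z \<noteq> 0"
  show ?thesis
  proof (cases "v z \<ge> 0")
    case True
    define e where "e = inverse \<pi> ^ nat (v z)"
    have ue: "unit_in D e" unfolding e_def using unit_power[OF sub unit_inverse[OF pi_unit]] .
    have "v (z * e) = 0" unfolding e_def using True z pi_basic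
      by (simp add: vmult vpow vinv vpi power_inverse[symmetric])
    moreover have "z * e \<in> D" using ue z subringD(5)[OF sub] unfolding unit_in_iff by auto
    ultimately show ?thesis using ue inV unfolding Rdef by auto
  next
    case False
    define e where "e = \<pi> ^ nat (- v z)"
    have ue: "unit_in D e" unfolding e_def using unit_power[OF sub pi_unit] .
    have "v (z * e) = 0" unfolding e_def using False z pi_basic
      by (simp add: vmult vpow vpi)
    moreover have "z * e \<in> D" using ue z subringD(5)[OF sub] unfolding unit_in_iff by auto
    ultimately show ?thesis using ue inV unfolding Rdef by auto
  qed
qed

lemma not_abs:
  assumes r: "irreducible_in R r" "\<not> assoc_in R r \<pi>"
  shows "\<not> abs_irreducible_in R r"
proof
  assume abs: "abs_irreducible_in R r"
  have rR: "r \<in> R" "r \<noteq> 0" "\<not> unit_in R r" using r unfolding irreducible_in_def by auto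
  have "r \<notin> M2"
  proof
    assume "r \<in> M2"
    then obtain c where c: "c \<in> R" "r = \<pi> * c" unfolding M2_def pid_def by auto
    then have "unit_in R \<pi> \<or> unit_in R c" using r pi_basic unfolding irreducible_in_def by auto
    then have "unit_in R c" using pR unfolding prime_elem_in_def by auto
    then show False using r(2) c unfolding assoc_in_def by (auto simp: mult.commute)
  qed
  then have vr: "v r = 0" "inverse r \<in> V" using notM2 rR by auto
  have rM1: "r \<in> M1"
  proof (rule ccontr)
    assume "r \<notin> M1"
    then have "inverse r \<in> D" using notM1 rR by auto
    then have "unit_in R r" using vr rR unfolding unit_in_iff Rdef by auto
    then show False using rR by auto
  qed
  then have rm: "r \<in> m" "r \<in> D" unfolding M1_def using m_sub by auto
  have claim: "assoc_in D z r"
    if z: "irreducible_in D z" "unit_in D e" "unit_in R u" "z * e = u * r ^ k" for z e u k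
  proof -
    have zD: "z \<in> D" "z \<noteq> 0" "\<not> unit_in D z" using z(1) unfolding irreducible_in_def by auto
    have ez: "e \<noteq> 0" "inverse e \<in> D" using z(2) unfolding unit_in_iff by auto
    have uD: "unit_in D (u * inverse e)" using unit_mult[OF sub unitR_D[OF z(3)] unit_inverse[OF z(2)]] .
    have zeq: "z = (u * inverse e) * r ^ k" using z(4) ez by (simp add: field_simps)
    have rnu: "\<not> unit_in D r" using unit_not_m rm by auto
    show ?thesis
    proof (cases k)
      case 0
      then have "unit_in D z" using zeq uD by simp
      then show ?thesis using zD by auto
    next
      case (Suc k')
      show ?thesis
      proof (cases k')
        case 0
        then show ?thesis using zeq Suc uD unfolding assoc_in_def by auto
      next
        case (Suc k'')
        have "z = ((u * inverse e) * r) * r ^ k'" using zeq \<open>k = Suc k'\<close> by (simp add: algebra_simps)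
        moreover have "(u * inverse e) * r \<in> m" using m_mult(1) uD rm unfolding unit_in_iff by auto
        moreover have "r ^ k' \<in> m" using ideal_power[OF m_ideal sub rm(1), of k'] Suc by simp
        ultimately have "unit_in D ((u * inverse e) * r) \<or> unit_in D (r ^ k')"
          using z(1) m_sub unfolding irreducible_in_def by blast
        then show ?thesis using unit_not_m \<open>(u * inverse e) * r \<in> m\<close> \<open>r ^ k' \<in> m\<close> by blast
      qed
    qed
  qed
  obtain x y where xy: "irreducible_in D x" "irreducible_in D y" "\<not> assoc_in D x y" using eA by blast
  have "\<exists>z e. irreducible_in D z \<and> unit_in D e \<and> z * e \<in> R \<and> v (z * e) = 0 \<and>
          \<not> (\<exists>u k. unit_in R u \<and> z * e = u * r ^ k)"
  proof (rule ccontr)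
    assume na: "\<not> ?thesis"
    obtain ex where ex: "unit_in D ex" "x * ex \<in> R" "v (x * ex) = 0"
      using normalize xy(1) unfolding irreducible_in_def by blast
    obtain ey where ey: "unit_in D ey" "y * ey \<in> R" "v (y * ey) = 0"
      using normalize xy(2) unfolding irreducible_in_def by blast
    obtain u k where "unit_in R u" "x * ex = u * r ^ k" using na xy(1) ex by blast
    then have ax: "assoc_in D x r" using claim xy(1) ex(1) by blast
    obtain u' k' where "unit_in R u'" "y * ey = u' * r ^ k'" using na xy(2) ey by blast
    then have ay: "assoc_in D y r" using claim xy(2) ey(1) by blast
    obtain a where a: "unit_in D a" "x = a * r" using ax unfolding assoc_in_def by auto
    obtain b where b: "unit_in D b" "y = b * r" using ay unfolding assoc_in_def by auto
    have "unit_in D (a * inverse b)" using unit_mult[OF sub a(1) unit_inverse[OF b(1)]] .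
    moreover have "x = (a * inverse b) * y" using a b by (auto simp: unit_in_iff)
    ultimately show False using xy(3) unfolding assoc_in_def by blast
  qed
  then obtain z e where ze: "irreducible_in D z" "unit_in D e" "z * e \<in> R" "v (z * e) = 0"
    "\<not> (\<exists>u k. unit_in R u \<and> z * e = u * r ^ k)" by blast
  define z' where "z' = z * e"
  have z'm: "z' \<in> m" "z' \<noteq> 0"
  proof -
    have "z \<in> m" "z \<noteq> 0" using ze(1) nonunit_m unfolding irreducible_in_def by auto
    then show "z' \<in> m" "z' \<noteq> 0" unfolding z'_def using m_mult(2) ze(2) unfolding unit_in_iff by auto
  qed
  have z'R: "z' \<in> R" "\<not> unit_in R z'" using ze(3) z'm unit_not_m unitR_D unfolding z'_def by auto
  obtain n c where c: "c \<in> D" "r ^ n = z' * c" using L2[OF z'm(1) z'm(2) rm(1)] by blast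
  have cnz: "c \<noteq> 0" using c rR by auto
  have "v (r ^ n) = v z' + v c" using c vmult cnz z'm by auto
  then have "v c = 0" using vpow rR vr ze(4) unfolding z'_def by auto
  then have cR: "c \<in> R" using c inV unfolding Rdef by auto
  have crR: "c * r \<in> R" "c * r \<noteq> 0" "\<not> unit_in R (c * r)"
  proof -
    show "c * r \<in> R" using subringD(5)[OF subR cR rR(1)] .
    show "c * r \<noteq> 0" using cnz rR by auto
    have "c * r \<in> m" using m_mult(1) c rm by auto
    then show "\<not> unit_in R (c * r)" using unit_not_m unitR_D by blast
  qed
  obtain xs where xs: "factorization_in R xs z'" using atomicR z'R z'm unfolding atomic_def by blast
  obtain ys where ys: "factorization_in R ys (c * r)" using atomicR crR unfolding atomic_def by blast
  have "factorization_in R (xs @ ys) (r ^ Suc n)"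
    using xs ys c unfolding factorization_in_def by (auto simp: algebra_simps)
  then have es: "essentially_same R (xs @ ys) (replicate (Suc n) r)"
    using abs unfolding abs_irreducible_in_def by blast
  then obtain \<sigma> where \<sigma>: "length (xs @ ys) = Suc n" "bij_betw \<sigma> {..<length (xs @ ys)} {..<length (xs @ ys)}"
    "\<forall>j<length (xs @ ys). assoc_in R ((xs @ ys) ! j) (replicate (Suc n) r ! \<sigma> j)"
    unfolding essentially_same_def by auto
  have "\<forall>a\<in>set xs. assoc_in R a r"
  proof
    fix a assume "a \<in> set xs"
    then obtain i where i: "i < length xs" "a = xs ! i" by (auto simp: in_set_conv_nth)
    then have il: "i < length (xs @ ys)" by simp
    then have "\<sigma> i < Suc n" using \<sigma>(1,2) unfolding bij_betw_def by auto
    then have "replicate (Suc n) r ! \<sigma> i = r" by (rule nth_replicate)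
    moreover have "(xs @ ys) ! i = a" using i by (simp add: nth_append)
    ultimately show "assoc_in R a r" using \<sigma>(3)[rule_format, OF il] by simp
  qed
  then obtain u where "unit_in R u" "prod_list xs = u * r ^ length xs" using prod_assoc[OF subR] by blast
  then show False using ze(5) xs unfolding factorization_in_def z'_def by metis
qed

end



theorem mainTheorem7:
  fixes D V R :: "'a::field set" and \<pi> :: 'a
  assumes D: "subring D" "quotient_field_is_L D" "noetherian D" "local_ring D" "krull_dim_one D"
    and V: "subring V" "quotient_field_is_L V" "noetherian V" "local_ring V" "krull_dim_one V"
    and R: "R = D \<inter> V"
    and a: "discrete_rank_one_valuation_ring V"
    and b: "prime_elem_in V \<pi>" "prime_elem_in R \<pi>"
    and c: "\<forall>N. maximal_ideal_in (integral_closure D) N \<longrightarrow>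
              independent (localization (integral_closure D) N) V"
    and d: "\<not> UFD D"
    and e: "\<exists>x y. irreducible_in D x \<and> irreducible_in D y \<and> \<not> assoc_in D x y \<and>
                 irreducible_in R x \<and> irreducible_in R y"
  shows "subring R \<and> krull_dim_one R \<and> noetherian R \<and> atomic R
         \<and> card {M. maximal_ideal_in R M} = 2
         \<and> (\<forall>p. prime_elem_in R p \<longrightarrow> assoc_in R p \<pi>)
         \<and> (\<exists>r. irreducible_in R r \<and> \<not> assoc_in R r \<pi>)
         \<and> (\<forall>r. irreducible_in R r \<and> \<not> assoc_in R r \<pi> \<longrightarrow> \<not> abs_irreducible_in R r)"
proof -
  obtain v :: "'a \<Rightarrow> int" where v:
    "\<forall>x y. x \<noteq> 0 \<and> y \<noteq> 0 \<longrightarrow> v (x * y) = v x + v y"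
    "\<forall>x y. x \<noteq> 0 \<and> y \<noteq> 0 \<and> x + y \<noteq> 0 \<longrightarrow> v (x + y) \<ge> min (v x) (v y)"
    "v ` (UNIV - {0}) = UNIV" "V = {x. x = 0 \<or> v x \<ge> 0}"
    using a unfolding discrete_rank_one_valuation_ring_def by blast
  have surj: "\<exists>t. t \<noteq> 0 \<and> v t = 1"
  proof -
    have "(1::int) \<in> v ` (UNIV - {0})" using v(3) by simp
    then show ?thesis by auto
  qed
  interpret setting D v V R \<pi>
  proof (unfold_locales)
    show "subring D" "local_ring D" "krull_dim_one D" using D by auto
    show "\<And>x y. x \<noteq> 0 \<Longrightarrow> y \<noteq> 0 \<Longrightarrow> v (x * y) = v x + v y" using v(1) by blast
    show "\<And>x y. x \<noteq> 0 \<Longrightarrow> y \<noteq> 0 \<Longrightarrow> x + y \<noteq> 0 \<Longrightarrow> min (v x) (v y) \<le> v (x + y)" using v(2) by blast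
    show "V = {x. x = 0 \<or> 0 \<le> v x}" using v(4) by simp
  qed (use surj D V R b e in auto)
  show ?thesis
    using subR krullR noethR atomicR card_max primes_assoc exists_irr not_abs by blast
qed


end
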